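(* Let $p$ be an odd prime, $s\ge1$, and $r\ge3$ an integer dividing $\frac{p^s\pm1}2$ (for a fixed choice of sign $\pm$). Let $\lambda=e^{2\pi i/(2r)}$ and $\eta=-\frac{(\lambda-\lambda^{-1})}{\sqrt{2r}}\,i$ with $\sqrt{2r}>0$. Then $$\eta^{p^s}\equiv\mp\left(\frac{-2r}{p}\right)^{s}\eta\pmod p,$$ where the sign $\mp$ is opposite to the sign $\pm$ in the hypothesis.
   Context: $\left(\frac{-2r}{p}\right)$ is the Legendre symbol. The congruence means the difference is $p$ times an element of the ring of algebraic integers with $2r$ inverted. *)

theory Defs
  imports "HOL-Complex_Analysis.Complex_Analysis" "HOL-Computational_Algebra.Polynomial"
    "HOL-Number_Theory.Number_Theory"
begin

definition alg_int_inv :: "nat \<Rightarrow> complex \<Rightarrow> bool" where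
  "alg_int_inv m x \<longleftrightarrow> (\<exists>y n. algebraic_int y \<and> x = y / (of_nat m) ^ n)"

definition cong_alg_inv :: "nat \<Rightarrow> complex \<Rightarrow> complex \<Rightarrow> complex \<Rightarrow> bool" where
  "cong_alg_inv m p a b \<longleftrightarrow> (\<exists>x. alg_int_inv m x \<and> a - b = p * x)"

end

theory Submission
  imports Defs "Jordan_Normal_Form.Char_Poly"
begin

lemma eig_alg_int:
  fixes B :: "int mat" and v :: "complex vec" and x :: complex
  assumes B: "B \<in> carrier_mat n n" and v: "v \<in> carrier_vec n" and nz: "v \<noteq> 0\<^sub>v n"
    and eq: "map_mat of_int B *\<^sub>v v = x \<cdot>\<^sub>v v"
  shows "algebraic_int x"
proof -
  let ?A = "map_mat (of_int :: int \<Rightarrow> complex) B"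
  have A: "?A \<in> carrier_mat n n" using B by simp
  have "eigenvalue ?A x" unfolding eigenvalue_def eigenvector_def
    using A v nz eq by (intro exI[of _ v]) auto
  hence "poly (char_poly ?A) x = 0" using eigenvalue_root_char_poly[OF A] by simp
  hence "poly (map_poly of_int (char_poly B)) x = 0"
    using of_int_hom.char_poly_hom[OF B] by (metis)
  moreover have "lead_coeff (char_poly B) = 1" using degree_monic_char_poly[OF B] by simp
  ultimately show ?thesis unfolding algebraic_int_altdef_ipoly by blast
qed

definition zv :: "nat \<Rightarrow> complex \<Rightarrow> complex vec" where
  "zv n z = vec n (\<lambda>j. z ^ j)"

definition inR :: "nat \<Rightarrow> complex \<Rightarrow> complex \<Rightarrow> bool" where
  "inR n z x \<longleftrightarrow> (\<exists>B. B \<in> carrier_mat n n \<and> map_mat of_int B *\<^sub>v zv n z = x \<cdot>\<^sub>v zv n z)"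

lemma inR_alg_int: assumes "n > 0" "inR n z x" shows "algebraic_int x"
proof -
  obtain B where B: "B \<in> carrier_mat n n" "map_mat of_int B *\<^sub>v zv n z = x \<cdot>\<^sub>v zv n z"
    using assms by (auto simp: inR_def)
  have "zv n z \<noteq> 0\<^sub>v n"
  proof
    assume "zv n z = 0\<^sub>v n"
    hence "zv n z $ 0 = 0\<^sub>v n $ 0" by simp
    thus False using assms(1) by (simp add: zv_def)
  qed
  thus ?thesis using eig_alg_int[OF B(1) _ _ B(2)] by (simp add: zv_def)
qed

lemma sum_delta_aux: fixes f :: "nat \<Rightarrow> complex" assumes "i < n"
  shows "(\<Sum>j = 0..<n. c * complex_of_int (if i = j then 1 else 0) * f j) = c * f i"
proof -
  have "(\<Sum>j = 0..<n. c * complex_of_int (if i = j then 1 else 0) * f j) = (\<Sum>j = 0..<n. if i = j then c * f j else 0)"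
    by (intro sum.cong) auto
  also have "\<dots> = c * f i" using assms by (simp add: sum.delta)
  finally show ?thesis .
qed

lemma inR_int: "inR n z (of_int k)"
  unfolding inR_def
proof (intro exI conjI)
  show "(k \<cdot>\<^sub>m 1\<^sub>m n) \<in> carrier_mat n n" by simp
  show "map_mat of_int (k \<cdot>\<^sub>m 1\<^sub>m n) *\<^sub>v zv n z = of_int k \<cdot>\<^sub>v zv n z"
    by (rule eq_vecI) (auto simp: zv_def scalar_prod_def sum_delta_aux)
qed

lemma inR_add: assumes "inR n z x" "inR n z y" shows "inR n z (x + y)"
proof -
  obtain A where A: "A \<in> carrier_mat n n" "map_mat of_int A *\<^sub>v zv n z = x \<cdot>\<^sub>v zv n z"
    using assms by (auto simp: inR_def)
  obtain B where B: "B \<in> carrier_mat n n" "map_mat of_int B *\<^sub>v zv n z = y \<cdot>\<^sub>v zv n z"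
    using assms by (auto simp: inR_def)
  have "map_mat of_int (A + B) *\<^sub>v zv n z = (map_mat of_int A + map_mat of_int B) *\<^sub>v zv n z"
    using A B by (intro arg_cong[where f = "\<lambda>M. M *\<^sub>v zv n z"] eq_matI) auto
  also have "\<dots> = (x + y) \<cdot>\<^sub>v zv n z"
    using A B by (simp add: add_mult_distrib_mat_vec add_smult_distrib_vec zv_def)
  finally show ?thesis unfolding inR_def using A B by (intro exI[of _ "A + B"]) auto
qed

lemma inR_mult: assumes "inR n z x" "inR n z y" shows "inR n z (x * y)"
proof -
  obtain A where A: "A \<in> carrier_mat n n" "map_mat of_int A *\<^sub>v zv n z = x \<cdot>\<^sub>v zv n z"
    using assms by (auto simp: inR_def)
  obtain B where B: "B \<in> carrier_mat n n" "map_mat of_int B *\<^sub>v zv n z = y \<cdot>\<^sub>v zv n z"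
    using assms by (auto simp: inR_def)
  have v: "zv n z \<in> carrier_vec n" by (simp add: zv_def)
  have "map_mat of_int (B * A) *\<^sub>v zv n z = (map_mat of_int B * map_mat of_int A) *\<^sub>v zv n z"
    using A B by (metis of_int_hom.mat_hom_mult)
  also have "\<dots> = map_mat of_int B *\<^sub>v (map_mat of_int A *\<^sub>v zv n z)"
    using A B v by (intro assoc_mult_mat_vec) auto
  also have "\<dots> = x \<cdot>\<^sub>v (y \<cdot>\<^sub>v zv n z)"
    using A B v by (simp add: mult_mat_vec)
  also have "\<dots> = (x * y) \<cdot>\<^sub>v zv n z" by (simp add: smult_smult_assoc)
  finally show ?thesis unfolding inR_def using A B by (intro exI[of _ "B * A"]) auto
qed

lemma inR_zeta: assumes "n > 0" "z ^ n = 1" shows "inR n z z"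
proof -
  define C :: "int mat" where "C = mat n n (\<lambda>(i,j). if j = Suc i mod n then 1 else 0)"
  have pm: "z ^ (k mod n) = z ^ k" for k
  proof -
    have "z ^ k = z ^ (k mod n + n * (k div n))" by simp
    also have "\<dots> = z ^ (k mod n)" by (simp only: power_add power_mult assms(2) power_one mult_1_right)
    finally show ?thesis by simp
  qed
  have "map_mat of_int C *\<^sub>v zv n z = z \<cdot>\<^sub>v zv n z"
  proof (rule eq_vecI)
    fix i assume i: "i < dim_vec (z \<cdot>\<^sub>v zv n z)"
    hence i: "i < n" by (simp add: zv_def)
    have "(map_mat of_int C *\<^sub>v zv n z) $ i = (\<Sum>j\<in>{0..<n}. complex_of_int (if j = Suc i mod n then 1 else 0) * z ^ j)"
      using i by (simp add: C_def zv_def scalar_prod_def)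
    also have "\<dots> = (\<Sum>j\<in>{0..<n}. (if j = Suc i mod n then z ^ j else 0))"
      by (rule sum.cong) auto
    also have "\<dots> = z ^ (Suc i mod n)"
      using assms(1) by (simp add: sum.delta)
    also have "\<dots> = (z \<cdot>\<^sub>v zv n z) $ i" using i by (simp add: pm zv_def)
    finally show "(map_mat of_int C *\<^sub>v zv n z) $ i = (z \<cdot>\<^sub>v zv n z) $ i" .
  qed (simp add: zv_def C_def)
  thus ?thesis unfolding inR_def by (intro exI[of _ C]) (simp add: C_def)
qed

lemma inR_minus: assumes "inR n z x" shows "inR n z (- x)"
proof -
  have "inR n z (of_int (-1) * x)" by (rule inR_mult[OF inR_int assms])
  thus ?thesis by simp
qed

lemma inR_diff: assumes "inR n z x" "inR n z y" shows "inR n z (x - y)"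
proof -
  have "inR n z (x + - y)" by (rule inR_add[OF assms(1) inR_minus[OF assms(2)]])
  thus ?thesis by simp
qed

lemma inR_power: "inR n z x \<Longrightarrow> inR n z (x ^ k)"
  by (induction k) (auto simp: inR_mult intro: inR_int[of n z 1, simplified])

lemma inR_sum: "(\<And>i. i \<in> A \<Longrightarrow> inR n z (f i)) \<Longrightarrow> inR n z (\<Sum>i\<in>A. f i)"
  by (induction A rule: infinite_finite_induct) (auto intro: inR_add inR_int[of n z 0, simplified])


lemma inR_of_nat: "inR n z (of_nat k)"
  using inR_int[of n z "int k"] by simp

definition congR :: "nat \<Rightarrow> complex \<Rightarrow> nat \<Rightarrow> complex \<Rightarrow> complex \<Rightarrow> bool" where
  "congR n z p a b \<longleftrightarrow> (\<exists>w. inR n z w \<and> a - b = of_nat p * w)"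

lemma congR_trans: assumes "congR n z p a b" "congR n z p b c" shows "congR n z p a c"
proof -
  obtain w1 where w1: "inR n z w1" "a - b = of_nat p * w1" using assms(1) by (auto simp: congR_def)
  obtain w2 where w2: "inR n z w2" "b - c = of_nat p * w2" using assms(2) by (auto simp: congR_def)
  have "a - c = of_nat p * (w1 + w2)" using w1 w2 by (simp add: algebra_simps)
  thus ?thesis unfolding congR_def using inR_add[OF w1(1) w2(1)] by blast
qed

lemma congR_pow: assumes "inR n z a" "inR n z b" "congR n z p a b" shows "congR n z p (a ^ k) (b ^ k)"
proof -
  obtain w where w: "inR n z w" "a - b = of_nat p * w" using assms(3) by (auto simp: congR_def)
  have "a ^ k - b ^ k = (a - b) * (\<Sum>i<k. b ^ (k - Suc i) * a ^ i)" by (rule power_diff_sumr2)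
  also have "\<dots> = of_nat p * (w * (\<Sum>i<k. b ^ (k - Suc i) * a ^ i))" using w by simp
  finally show ?thesis unfolding congR_def
    by (intro exI[of _ "w * (\<Sum>i<k. b ^ (k - Suc i) * a ^ i)"] conjI inR_mult w inR_sum inR_power assms) auto
qed

lemma frob1: assumes p: "prime p" and a: "inR n z a" and b: "inR n z b"
  shows "congR n z p ((a + b) ^ p) (a ^ p + b ^ p)"
proof -
  define f where "f = (\<lambda>k. of_nat (p choose k) * a ^ k * b ^ (p - k))"
  have p0: "p \<noteq> 0" using p by auto
  have "(a + b) ^ p = (\<Sum>k\<le>p. f k)" unfolding f_def by (rule binomial_ring)
  also have "\<dots> = (\<Sum>k\<in>{..p} - {1..<p}. f k) + (\<Sum>k\<in>{1..<p}. f k)"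
    by (rule sum.subset_diff) auto
  also have "{..p} - {1..<p} = {0, p}" using p0 by auto
  also have "(\<Sum>k\<in>{0, p}. f k) = a ^ p + b ^ p" using p0 by (simp add: f_def)
  finally have eq: "(a + b) ^ p - (a ^ p + b ^ p) = (\<Sum>k\<in>{1..<p}. f k)" by simp
  have "f k = of_nat p * (of_nat ((p choose k) div p) * a ^ k * b ^ (p - k))" if "k \<in> {1..<p}" for k
  proof -
    have "p dvd (p choose k)" using that p0 p by (intro dvd_choose_prime) auto
    hence "(p choose k) = p * ((p choose k) div p)" by simp
    hence "(of_nat (p choose k) :: complex) = of_nat p * of_nat ((p choose k) div p)"
      by (metis of_nat_mult)
    thus ?thesis by (simp add: f_def)
  qed
  hence "(\<Sum>k\<in>{1..<p}. f k) = of_nat p * (\<Sum>k\<in>{1..<p}. of_nat ((p choose k) div p) * a ^ k * b ^ (p - k))"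
    by (simp add: sum_distrib_left)
  with eq show ?thesis unfolding congR_def
    by (intro exI[of _ "\<Sum>k\<in>{1..<p}. of_nat ((p choose k) div p) * a ^ k * b ^ (p - k)"] conjI
        inR_sum inR_mult inR_power inR_of_nat a b) auto
qed

lemma frob: assumes p: "prime p" and a: "inR n z a" and b: "inR n z b"
  shows "congR n z p ((a + b) ^ (p ^ s)) (a ^ (p ^ s) + b ^ (p ^ s))"
proof (induction s)
  case 0
  show ?case unfolding congR_def by (intro exI[of _ 0]) (auto intro: inR_int[of n z 0, simplified])
next
  case (Suc s)
  have "congR n z p (((a + b) ^ (p ^ s)) ^ p) ((a ^ (p ^ s) + b ^ (p ^ s)) ^ p)"
    by (intro congR_pow Suc inR_power inR_add a b)
  moreover have "congR n z p ((a ^ (p ^ s) + b ^ (p ^ s)) ^ p) ((a ^ (p ^ s)) ^ p + (b ^ (p ^ s)) ^ p)"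
    by (intro frob1 p inR_power a b)
  ultimately have "congR n z p (((a + b) ^ (p ^ s)) ^ p) ((a ^ (p ^ s)) ^ p + (b ^ (p ^ s)) ^ p)"
    by (rule congR_trans)
  thus ?case by (simp only: power_Suc2 power_mult)
qed

lemma Legendre_cases: "Legendre a p \<in> {-1, 0, 1}"
  by (auto simp: Legendre_def)

lemma pow_odd_unit: assumes "L \<in> {-1, 0, 1::int}" "odd k" shows "L ^ k = L"
  using assms by (auto simp: power_0_left odd_pos)

lemma euler_pow: assumes "prime p" "2 < p"
  shows "[a ^ ((p ^ s - 1) div 2) = Legendre a p ^ s] (mod int p)"
proof (induction s)
  case 0
  then show ?case by simp
next
  case (Suc s)
  have op: "odd p" using assms by (metis prime_odd_nat)
  have pp: "p ^ s \<ge> 1" using assms by simp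
  have e: "(p ^ Suc s - 1) div 2 = p * ((p ^ s - 1) div 2) + (p - 1) div 2"
  proof -
    have "odd (p ^ s)" using op by simp
    then obtain M where M: "p ^ s = 2 * M + 1" by (metis oddE)
    obtain H where H: "p = 2 * H + 1" using op by (metis oddE)
    have "p ^ Suc s = p * p ^ s" by simp
    also have "\<dots> = (2 * H + 1) * (2 * M + 1)" by (simp only: M) (simp only: H)
    also have "\<dots> = 2 * ((2 * H + 1) * M + H) + 1" by (simp add: algebra_simps)
    also have "\<dots> = 2 * (p * M + H) + 1" using H by simp
    finally have "p ^ Suc s - 1 = 2 * (p * M + H)" by simp
    hence "(p ^ Suc s - 1) div 2 = p * M + H" by simp
    moreover have "(p ^ s - 1) div 2 = M" using M by simp
    moreover have "(p - 1) div 2 = H" using H by simp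
    ultimately show ?thesis by simp
  qed
  have "a ^ ((p ^ Suc s - 1) div 2) = (a ^ ((p ^ s - 1) div 2)) ^ p * a ^ ((p - 1) div 2)"
    unfolding e power_add mult.commute[of p] power_mult by simp
  moreover have "[(a ^ ((p ^ s - 1) div 2)) ^ p = (Legendre a p ^ s) ^ p] (mod int p)"
    using Suc by (rule cong_pow)
  moreover have "[a ^ ((p - 1) div 2) = Legendre a p] (mod int p)"
    using euler_criterion[of p a] assms by (simp add: cong_sym)
  moreover have "(Legendre a p ^ s) ^ p = Legendre a p ^ s"
    by (simp add: power_mult[symmetric] mult.commute[of s] power_mult pow_odd_unit[OF Legendre_cases op])
  ultimately show ?case by (metis cong_mult power_Suc mult.commute)
qed


theorem lemma7:
  fixes p s r :: nat and eps :: int and lam eta :: complex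
  assumes "prime p" and "odd p" and "s \<ge> 1" and "r \<ge> 3"
    and "eps \<in> {1, -1}"
    and "int r dvd (int p ^ s + eps) div 2"
    and "lam = exp (2 * of_real pi * \<i> / (2 * of_nat r))"
    and "eta = - ((lam - inverse lam) / of_real (sqrt (2 * real r))) * \<i>"
  shows "cong_alg_inv (2 * r) (of_nat p) (eta ^ (p ^ s))
           (- of_int (eps * Legendre (- 2 * int r) (int p) ^ s) * eta)"
  proof -
  define N where "N = p ^ s"
  have p2: "2 < p" using assms(1,2) prime_ge_2_nat[OF assms(1)] by (metis le_neq_implies_less odd_numeral even_numeral)
  have p0: "p > 0" using p2 by simp
  have oddN: "odd N" unfolding N_def using assms(2) by simp
  then obtain m where Nm: "N = 2 * m + 1" by (metis oddE)
  have mdef: "(p ^ s - 1) div 2 = m" using Nm unfolding N_def by simp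
  have eps2: "eps * eps = 1" using assms(5) by auto
  have r0: "r > 0" using assms(4) by simp
  obtain k where k: "(int p ^ s + eps) div 2 = int r * k" using assms(6) by (metis dvd_def)
  have ev: "even (int p ^ s + eps)" using oddN assms(5) unfolding N_def by auto
  have kk: "int N + eps = 2 * int r * k" using k ev unfolding N_def
    by (metis dvd_mult_div_cancel mult.assoc of_nat_power)
  have k0: "k \<ge> 0"
  proof -
    have "int N \<ge> 1" using oddN by (metis Nm le_add2 of_nat_1 of_nat_le_iff)
    hence "int N + eps \<ge> 0" using assms(5) by auto
    hence "(2 * int r) * k \<ge> 0" using kk by (simp only: mult.assoc)
    moreover have "2 * int r > 0" using r0 by simp
    ultimately show ?thesis by (simp add: zero_le_mult_iff)
  qed
  define K where "K = nat k"
  have KK: "int N + eps = int (2 * r * K)" using kk k0 unfolding K_def by simp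
  define n where "n = 4 * r"
  have n0: "n > 0" unfolding n_def using r0 by simp
  define z where "z = exp (2 * of_real pi * \<i> / of_nat n)"
  have zpow: "z ^ j = exp (of_nat j * (2 * of_real pi * \<i> / of_nat n))" for j
    unfolding z_def by (rule exp_of_nat_mult[symmetric])
  have zn: "z ^ n = 1" unfolding zpow using n0 by simp
  have z2: "z ^ 2 = lam" unfolding zpow assms(7) n_def using r0
    by (intro arg_cong[where f = exp]) (simp add: field_simps)
  have zr: "z ^ r = \<i>"
  proof -
    have "z ^ r = exp (\<i> * complex_of_real (pi / 2))" unfolding zpow n_def using r0
      by (intro arg_cong[where f = exp]) (simp add: field_simps)
    also have "\<dots> = \<i>" by (metis cis_conv_exp cis_pi_half)
    finally show ?thesis .
  qed
  have Rz: "inR n z z" by (rule inR_zeta[OF n0 zn])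
  have Rlam: "inR n z lam" using inR_power[OF Rz, of 2] z2 by simp
  have Ri: "inR n z \<i>" using inR_power[OF Rz, of r] zr by simp
  have lam2r: "lam ^ (2 * r) = 1" using zn z2 unfolding n_def by (metis power_mult mult.commute numeral_Bit0 mult_2)
  have lam0: "lam \<noteq> 0" using lam2r r0 by (auto simp: power_0_left)
  have linv: "inverse lam = lam ^ (2 * r - 1)"
  proof -
    have "lam * lam ^ (2 * r - 1) = 1" using lam2r r0
      by (metis Suc_diff_1 mult_pos_pos pos2 power_Suc)
    thus ?thesis by (metis inverse_unique)
  qed
  have Rlinv: "inR n z (inverse lam)" unfolding linv by (rule inR_power[OF Rlam])
  have lamN: "lam ^ N - inverse lam ^ N = - of_int eps * (lam - inverse lam)"
  proof (cases "eps = 1")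
    case True
    hence "N + 1 = 2 * r * K" using KK by linarith
    have "lam * lam ^ N = lam ^ (N + 1)" by simp
    also have "\<dots> = (lam ^ (2 * r)) ^ K" using \<open>N + 1 = 2 * r * K\<close> by (simp add: power_mult)
    also have "\<dots> = 1" using lam2r by simp
    finally have "inverse lam = lam ^ N" by (rule inverse_unique)
    hence "lam ^ N = inverse lam" by simp
    thus ?thesis using True lam0 by (simp add: power_inverse)
  next
    case False
    hence e: "eps = -1" using assms(5) by auto
    hence "N = 2 * r * K + 1" using KK by linarith
    hence "lam ^ N = (lam ^ (2 * r)) ^ K * lam" by (simp add: power_mult)
    hence "lam ^ N = lam" using lam2r by simp
    thus ?thesis using e lam0 by (simp add: power_inverse)
  qed
  define \<sigma> where "\<sigma> = - \<i> * (lam - inverse lam)"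
  have Rsig: "inR n z \<sigma>" unfolding \<sigma>_def by (intro inR_mult inR_minus inR_diff Ri Rlam Rlinv)
  define a where "a = - \<i> * lam"
  define b where "b = \<i> * inverse lam"
  have ab: "a + b = \<sigma>" unfolding a_def b_def \<sigma>_def by (simp add: algebra_simps)
  have Ra: "inR n z a" unfolding a_def by (intro inR_mult inR_minus Ri Rlam)
  have Rb: "inR n z b" unfolding b_def by (intro inR_mult Ri Rlinv)
  have fr: "congR n z p (\<sigma> ^ N) (a ^ N + b ^ N)"
    using frob[OF assms(1) Ra Rb, of s] ab unfolding N_def by simp
  define u :: complex where "u = (-1) ^ m"
  have iN: "\<i> ^ N = \<i> * u" unfolding Nm u_def by (simp add: power_add power_mult)
  have abN: "a ^ N + b ^ N = - u * of_int eps * \<sigma>"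
  proof -
    have "a ^ N + b ^ N = - (\<i> ^ N) * (lam ^ N - inverse lam ^ N)"
      unfolding a_def b_def using oddN by (simp add: power_mult_distrib algebra_simps)
    also have "\<dots> = - u * of_int eps * \<sigma>" unfolding iN lamN \<sigma>_def by (simp add: algebra_simps)
    finally show ?thesis .
  qed
  obtain z1 where z1: "inR n z z1" "\<sigma> ^ N - (- u * of_int eps * \<sigma>) = of_nat p * z1"
    using fr abN unfolding congR_def by auto
  define L where "L = Legendre (- 2 * int r) (int p)"
  have "[(- 2 * int r) ^ m = L ^ s] (mod int p)"
    using euler_pow[OF assms(1) p2, of "- 2 * int r" s] unfolding mdef L_def .
  then obtain t where t: "(- 2 * int r) ^ m - L ^ s = int p * t"
    unfolding cong_iff_dvd_diff by (metis dvd_def)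
  have pnr: "\<not> int p dvd (- 2 * int r)"
  proof
    assume "int p dvd (- 2 * int r)"
    hence "p dvd 2 * r" by (metis dvd_minus_iff int_dvd_int_iff mult_minus_left of_nat_mult of_nat_numeral)
    hence "p dvd 2 \<or> p dvd r" using assms(1) prime_dvd_mult_iff by blast
    moreover have "\<not> p dvd 2" using p2 by (metis nat_dvd_not_less zero_less_numeral)
    ultimately have "p dvd r" by simp
    hence "int p dvd int N + eps" using KK by (metis dvd_mult dvd_mult2 int_dvd_int_iff)
    moreover have "int p dvd int N" unfolding N_def using assms(3) by (simp add: dvd_power)
    ultimately have "int p dvd eps" by (metis dvd_add_right_iff)
    hence "int p dvd 1" using assms(5) by auto
    thus False using p2 by simp
  qed
  have L0: "L \<noteq> 0" using pnr unfolding L_def Legendre_def by (auto simp: cong_0_iff)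
  have LL: "L ^ s * L ^ s = 1"
  proof -
    have "L = 1 \<or> L = -1" using L0 Legendre_cases[of "- 2 * int r" "int p"] unfolding L_def by auto
    thus ?thesis by (auto simp flip: power_mult_distrib)
  qed
  define E :: complex where "E = of_int eps"
  define Q :: complex where "Q = of_int (L ^ s)"
  define T :: complex where "T = of_int t"
  define P :: complex where "P = of_nat p"
  define R2 :: complex where "R2 = of_nat (2 * r)"
  have QQ: "Q * Q = 1" unfolding Q_def using LL by (metis of_int_1 of_int_mult)
  have uu: "u * u = 1" unfolding u_def by (simp flip: power_mult_distrib)
  have R2m: "R2 ^ m = u * (Q + P * T)"
  proof -
    have "(- 2 * int r) ^ m = L ^ s + int p * t" using t by simp
    hence "(of_int ((- 2 * int r) ^ m) :: complex) = Q + P * T" unfolding Q_def P_def T_def by simp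
    moreover have "(of_int ((- 2 * int r) ^ m) :: complex) = u * R2 ^ m"
      unfolding u_def R2_def by (simp add: power_mult_distrib power_minus[of "2 * complex_of_nat r"])
    ultimately have "u * R2 ^ m = Q + P * T" by simp
    hence "u * (u * R2 ^ m) = u * (Q + P * T)" by simp
    thus ?thesis using uu by (simp add: mult.assoc[symmetric])
  qed
  define w where "w = z1 + E * Q * u * T * \<sigma>"
  have Rw: "inR n z w" unfolding w_def E_def Q_def u_def T_def
    by (intro inR_add inR_mult z1 inR_int Rsig inR_power inR_minus[OF inR_int[of n z 1, simplified]])
  have key: "\<sigma> ^ N + E * Q * R2 ^ m * \<sigma> = P * w"
  proof -
    have s1: "\<sigma> ^ N = P * z1 - u * E * \<sigma>" using z1(2) unfolding P_def E_def by (simp add: algebra_simps)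
    have "E * Q * R2 ^ m * \<sigma> = E * u * (Q * Q) * \<sigma> + P * (E * Q * u * T * \<sigma>)"
      unfolding R2m by (simp add: algebra_simps)
    also have "\<dots> = E * u * \<sigma> + P * (E * Q * u * T * \<sigma>)" using QQ by simp
    finally show ?thesis unfolding s1 w_def by (simp add: algebra_simps)
  qed
  define S :: complex where "S = of_real (sqrt (2 * real r))"
  have SS: "S ^ 2 = R2" unfolding S_def R2_def
    by (metis of_real_power of_nat_0_le_iff real_sqrt_pow2 of_real_of_nat_eq of_nat_mult of_nat_numeral mult_nonneg_nonneg zero_le_numeral)
  have S0: "S \<noteq> 0" using SS r0 unfolding R2_def by auto
  have R20: "R2 \<noteq> 0" using r0 unfolding R2_def by simp
  define y where "y = S * w"
  have "algebraic_int (R2 * w ^ 2)"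
    by (rule inR_alg_int[OF n0, where z = z]) (unfold R2_def, intro inR_mult inR_of_nat inR_power Rw)
  hence yint: "algebraic_int y"
  proof (rule algebraic_int_root[where p = "Polynomial.monom 1 2"])
    show "poly (Polynomial.monom 1 2) y = R2 * w ^ 2" unfolding y_def using SS by (simp add: poly_monom power_mult_distrib)
  qed (auto simp: degree_monom_eq coeff_monom)
  define x where "x = y / (of_nat (2 * r)) ^ (m + 1)"
  have xint: "alg_int_inv (2 * r) x" unfolding alg_int_inv_def x_def using yint by blast
  have eta: "eta = \<sigma> / S" unfolding assms(8) \<sigma>_def S_def by (simp add: algebra_simps minus_divide_left)
  have SN: "S ^ N = R2 ^ m * S" unfolding Nm using SS by (simp add: power_add power_mult)
  have "eta ^ (p ^ s) - (- of_int (eps * L ^ s) * eta) = (\<sigma> ^ N + E * Q * R2 ^ m * \<sigma>) / (R2 ^ m * S)"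
    unfolding eta N_def[symmetric] E_def Q_def using SN S0 R20 by (simp add: field_simps power_divide)
  also have "\<dots> = P * w / (R2 ^ m * S)" unfolding key ..
  also have "\<dots> = of_nat p * x" unfolding x_def y_def P_def R2_def[symmetric] using S0 R20 SS
    by (simp add: field_simps power2_eq_square)
  finally show ?thesis unfolding cong_alg_inv_def L_def using xint by blast
qed

end
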